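(* Let $d\ge1$, $\nu_p>0$, and let $p\in\mathcal T^d_{\nu_p}$ be a Student distribution with location $\mu_p\in\mathbb R^d$ and shape $\Sigma_p\in\mathcal S^d_{++}$. Let $\nu>0$ and consider the Student family $\mathcal T^d_\nu$, viewed as the $\lambda$-exponential family with $\lambda=-\frac2{\nu+d}$, sufficient statistic $T(x)=(x,xx^\top)$ and Lebesgue base measure, with associated $\alpha=1+\frac2{\nu+d}$. Then $p$ is $\mathcal T^d_\nu$-compatible if and only if $\nu_p+2\frac{\nu_p+d}{\nu+d}>2$, and the escort $p^{(\alpha)}$ is a Student distribution with $\nu^{(\alpha)}=\nu_p+2\frac{\nu_p+d}{\nu+d}$ degrees of freedom, location $\mu^{(\alpha)}=\mu_p$ and shape $\Sigma^{(\alpha)}=\frac{\nu_p}{\nu^{(\alpha)}}\Sigma_p$.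
   Context: $\mathcal S^d_{++}$ denotes positive definite symmetric $d\times d$ matrices. The Student family $\mathcal T^d_\nu$ consists of densities on $\mathbb R^d$ (w.r.t. Lebesgue) $q_{\mu,\Sigma}(x)=\frac1{Z_\nu}\det(\Sigma)^{-1/2}\big(1+\frac1\nu(x-\mu)^\top\Sigma^{-1}(x-\mu)\big)^{-\frac{\nu+d}2}$ with $\mu\in\mathbb R^d$, $\Sigma\in\mathcal S^d_{++}$ and normalizing constant $Z_\nu$. The escort of a density $p$ with exponent $\alpha>0$ is $p^{(\alpha)}=p^\alpha/\int p^\alpha dx$ (when finite). For the $\lambda$-exponential family with sufficient statistic $T$ (with densities $q_\vartheta(x)=\exp(c_\lambda(\vartheta,T(x))-\varphi_\lambda(\vartheta))$, $c_\lambda(u,v)=\frac1\lambda\log(1+\lambda\langle u,v\rangle)$, support $S_\vartheta=\{x:1+\lambda\langle\vartheta,T(x)\rangle>0\}$), a density $p$ is $\mathcal T^d_\nu$-compatible if for every member $q_\vartheta$, with $p_{|S_\vartheta}=p\mathbf 1_{S_\vartheta}$, one has $\int p_{|S_\vartheta}^\alpha dx\in(0,\infty)$ and $\int T\,p_{|S_\vartheta}^\alpha dx$ finite componentwise; for the Student family all supports equal $\mathbb R^d$. *)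

theory Defs
  imports "HOL-Analysis.Analysis"
begin

text \<open>Dimension d = CARD('n); R^d is real^'n, d x d matrices are real^'n^'n.\<close>

definition pos_def_sym :: "real^'n^'n \<Rightarrow> bool" where
  "pos_def_sym S \<longleftrightarrow> transpose S = S \<and> (\<forall>x::real^'n. x \<noteq> 0 \<longrightarrow> x \<bullet> (S *v x) > 0)"

definition student_kernel :: "real \<Rightarrow> real^'n \<Rightarrow> real^'n^'n \<Rightarrow> real^'n \<Rightarrow> real" where
  "student_kernel \<nu> \<mu> S x =
     (1 + (1/\<nu>) * ((x - \<mu>) \<bullet> (matrix_inv S *v (x - \<mu>)))) powr (-(\<nu> + real CARD('n)) / 2)"

definition student_density :: "real \<Rightarrow> real^'n \<Rightarrow> real^'n^'n \<Rightarrow> real^'n \<Rightarrow> real" where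
  "student_density \<nu> \<mu> S x =
     (1 / integral\<^sup>L lborel (\<lambda>y::real^'n. student_kernel \<nu> 0 (mat 1) y))
     * det S powr (-1/2) * student_kernel \<nu> \<mu> S x"

definition escort :: "real \<Rightarrow> (real^'n \<Rightarrow> real) \<Rightarrow> real^'n \<Rightarrow> real" where
  "escort \<alpha> p x = p x powr \<alpha> / integral\<^sup>L lborel (\<lambda>y. p y powr \<alpha>)"

text \<open>T^d_nu-compatibility: the Student family as lambda-exponential family with
  lambda = -2/(nu+d), T(x) = (x, x x^T), alpha = 1 + 2/(nu+d).  For every member q_theta
  (every mu, positive definite Sigma) with support S_theta (where the member is positive,
  which is all of R^d), the restriction of p to S_theta raised to alpha has integral in (0,inf)
  and all components of T times it are (Lebesgue) integrable.\<close>

definition student_alpha :: "real \<Rightarrow> nat \<Rightarrow> real" where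
  "student_alpha \<nu> d = 1 + 2 / (\<nu> + real d)"

definition student_compatible :: "real \<Rightarrow> (real^'n \<Rightarrow> real) \<Rightarrow> bool" where
  "student_compatible \<nu> p \<longleftrightarrow>
     (\<forall>(\<mu>::real^'n) (S::real^'n^'n). pos_def_sym S \<longrightarrow>
       (let supp = {x. student_density \<nu> \<mu> S x > 0};
            pr = (\<lambda>x. indicator supp x * p x);
            \<alpha> = student_alpha \<nu> CARD('n)
        in integrable lborel (\<lambda>x. pr x powr \<alpha>)
           \<and> integral\<^sup>L lborel (\<lambda>x. pr x powr \<alpha>) > 0
           \<and> (\<forall>i. integrable lborel (\<lambda>x. x $ i * pr x powr \<alpha>))
           \<and> (\<forall>i j. integrable lborel (\<lambda>x. x $ i * x $ j * pr x powr \<alpha>))))"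

end

theory Submission imports Defs begin

proposition
 fixes f :: "real^'n::finite \<Rightarrow> real^'n::_"
  assumes "linear f" "S \<in> lmeasurable"
  shows measurable_linear_image': "(f ` S) \<in> lmeasurable"
    and measure_linear_image': "measure lebesgue (f ` S) = \<bar>det (matrix f)\<bar> * measure lebesgue S" (is "?Q f S")
proof -
  have "\<forall>S \<in> lmeasurable. (f ` S) \<in> lmeasurable \<and> ?Q f S"
  proof (rule induct_linear_elementary [OF \<open>linear f\<close>]; intro ballI)
    fix f g and S :: "(real,'n) vec set"
    assume "linear f" and "linear g"
      and f [rule_format]: "\<forall>S \<in> lmeasurable. f ` S \<in> lmeasurable \<and> ?Q f S"
      and g [rule_format]: "\<forall>S \<in> lmeasurable. g ` S \<in> lmeasurable \<and> ?Q g S"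
      and S: "S \<in> lmeasurable"
    then have gS: "g ` S \<in> lmeasurable"
      by blast
    show "(f \<circ> g) ` S \<in> lmeasurable \<and> ?Q (f \<circ> g) S"
      using f [OF gS] g [OF S] matrix_compose [OF \<open>linear g\<close> \<open>linear f\<close>]
      by (simp add: o_def image_comp abs_mult det_mul)
  next
    fix f :: "real^'n::_ \<Rightarrow> real^'n::_" and i and S :: "(real^'n::_) set"
    assume "linear f" and 0: "\<And>x. f x $ i = 0" and "S \<in> lmeasurable"
    then have "\<not> inj f"
      by (metis (full_types) linear_injective_imp_surjective one_neq_zero surjE vec_component)
    have detf: "det (matrix f) = 0"
      using \<open>\<not> inj f\<close> det_nz_iff_inj[OF \<open>linear f\<close>] by blast
    show "f ` S \<in> lmeasurable \<and> ?Q f S"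
    proof
      show "f ` S \<in> lmeasurable"
        using lmeasurable_iff_indicator_has_integral \<open>linear f\<close> \<open>\<not> inj f\<close> negligible_UNIV negligible_linear_singular_image by blast
      have "measure lebesgue (f ` S) = 0"
        by (meson \<open>\<not> inj f\<close> \<open>linear f\<close> negligible_imp_measure0 negligible_linear_singular_image)
      also have "\<dots> = \<bar>det (matrix f)\<bar> * measure lebesgue S"
        by (simp add: detf)
      finally show "?Q f S" .
    qed
  next
    fix c and S :: "(real^'n::_) set"
    assume "S \<in> lmeasurable"
    show "(\<lambda>a. \<chi> i. c i * a $ i) ` S \<in> lmeasurable \<and> ?Q (\<lambda>a. \<chi> i. c i * a $ i) S"
    proof
      show "(\<lambda>a. \<chi> i. c i * a $ i) ` S \<in> lmeasurable"
        by (simp add: \<open>S \<in> lmeasurable\<close> measurable_stretch)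
      show "?Q (\<lambda>a. \<chi> i. c i * a $ i) S"
        by (simp add: measure_stretch [OF \<open>S \<in> lmeasurable\<close>, of c] axis_def matrix_def det_diagonal)
    qed
  next
    fix m :: "'n" and n :: "'n" and S :: "(real, 'n) vec set"
    assume "m \<noteq> n" and "S \<in> lmeasurable"
    let ?h = "\<lambda>v::(real, 'n) vec. \<chi> i. v $ Transposition.transpose m n i"
    have lin: "linear ?h"
      by (rule linearI) (simp_all add: plus_vec_def scaleR_vec_def)
    have meq: "measure lebesgue ((\<lambda>v::(real, 'n) vec. \<chi> i. v $ Transposition.transpose m n i) ` cbox a b)
             = measure lebesgue (cbox a b)" for a b
    proof (cases "cbox a b = {}")
      case True then show ?thesis
        by simp
    next
      case False
      then have him: "?h ` (cbox a b) \<noteq> {}"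
        by blast
      have eq: "?h ` (cbox a b) = cbox (?h a) (?h b)"
        by (auto simp: image_iff lambda_swap_Galois mem_box_cart) (metis transpose_involutory)+
      show ?thesis
        using him prod.permute [OF permutes_swap_id, where S=UNIV and g="\<lambda>i. (b - a)$i", symmetric]
        by (simp add: eq content_cbox_cart False)
    qed
    have "(\<chi> i j. if Transposition.transpose m n i = j then 1 else 0) = (\<chi> i j. if j = Transposition.transpose m n i then 1 else (0::real))"
      by (auto intro!: Cart_lambda_cong)
    then have "matrix ?h = transpose(\<chi> i j. mat 1 $ i $ Transposition.transpose m n j)"
      by (auto simp: matrix_eq transpose_def axis_def mat_def matrix_def)
    then have 1: "\<bar>det (matrix ?h)\<bar> = 1"
      by (simp add: det_permute_columns permutes_swap_id sign_swap_id abs_mult)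
    show "?h ` S \<in> lmeasurable \<and> ?Q ?h S"
      using measure_linear_sufficient [OF lin \<open>S \<in> lmeasurable\<close>] meq 1 by force
  next
    fix m n :: "'n" and S :: "(real, 'n) vec set"
    assume "m \<noteq> n" and "S \<in> lmeasurable"
    let ?h = "\<lambda>v::(real, 'n) vec. \<chi> i. if i = m then v $ m + v $ n else v $ i"
    have lin: "linear ?h"
      by (rule linearI) (auto simp: algebra_simps plus_vec_def scaleR_vec_def vec_eq_iff)
    have 1: "det(matrix ?h) = 1"
    proof -
      have "matrix ?h = (\<chi> k. if k = m then row m (mat 1) + 1 *s row n (mat 1) else row k (mat (1::real)))"
        by (auto simp: vec_eq_iff matrix_def axis_def row_def mat_def)
      then show ?thesis using det_row_operation[OF \<open>m \<noteq> n\<close>, of "mat 1" 1] by simp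
    qed
    have meq: "measure lebesgue (?h ` (cbox a b)) = measure lebesgue (cbox a b)" for a b
    proof (cases "cbox a b = {}")
      case True then show ?thesis by simp
    next
      case False
      then have ne: "(+) (\<chi> i. if i = n then - a $ n else 0) ` cbox a b \<noteq> {}"
        by auto
      let ?v = "\<chi> i. if i = n then - a $ n else 0"
      have "?h ` cbox a b
            = (+) (\<chi> i. if i = m \<or> i = n then a $ n else 0) ` ?h ` (+) ?v ` (cbox a b)"
        using \<open>m \<noteq> n\<close> unfolding image_comp o_def by (force simp: vec_eq_iff)
      then have "measure lebesgue (?h ` (cbox a b))
               = measure lebesgue ((\<lambda>v. \<chi> i. if i = m then v $ m + v $ n else v $ i) `
                                   (+) ?v ` cbox a b)"
        by (rule ssubst) (rule measure_translation)
      also have "\<dots> = measure lebesgue ((\<lambda>v. \<chi> i. if i = m then v $ m + v $ n else v $ i) ` cbox (?v +a) (?v + b))"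
        by (metis (no_types, lifting) cbox_translation)
      also have "\<dots> = measure lebesgue ((+) ?v ` cbox a b)"
        apply (subst measure_shear_interval)
        using \<open>m \<noteq> n\<close> ne apply auto
        apply (simp add: cbox_translation)
        by (metis cbox_borel cbox_translation measure_completion sets_lborel)
      also have "\<dots> = measure lebesgue (cbox a b)"
        by (rule measure_translation)
        finally show ?thesis .
      qed
    show "?h ` S \<in> lmeasurable \<and> ?Q ?h S"
      using measure_linear_sufficient [OF lin \<open>S \<in> lmeasurable\<close>] meq 1 by force
  qed
  with assms show "(f ` S) \<in> lmeasurable" "?Q f S"
    by metis+
qed

lemma invertible_inv:
  fixes A :: "real^'n^'n"
  assumes "invertible A"
  shows "A ** matrix_inv A = mat 1" "matrix_inv A ** A = mat 1"
  using someI_ex[OF assms[unfolded invertible_def]] unfolding matrix_inv_def by auto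

lemma lborel_linear:
  fixes A :: "real^'n^'n"
  assumes "det A \<noteq> 0"
  shows "lborel = density (distr lborel borel (\<lambda>y. A *v y)) (\<lambda>_. ennreal \<bar>det A\<bar>)"
proof (rule lborel_eqI)
  have inv: "invertible A" using assms invertible_det_nz by blast
  define B where "B = matrix_inv A"
  have AB: "A ** B = mat 1" "B ** A = mat 1" using invertible_inv[OF inv] B_def by auto
  have dAB: "\<bar>det A\<bar> * \<bar>det B\<bar> = 1"
    using arg_cong[OF AB(1), of det] by (simp add: det_mul abs_mult[symmetric])
  have [measurable]: "(\<lambda>y. A *v y) \<in> borel \<rightarrow>\<^sub>M borel"
    by (intro borel_measurable_continuous_onI linear_continuous_on matrix_vector_mul_bounded_linear)
  fix l u :: "real^'n" assume le: "\<And>b. b \<in> Basis \<Longrightarrow> l \<bullet> b \<le> u \<bullet> b"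
  have pre: "(\<lambda>y. A *v y) -` box l u = (\<lambda>x. B *v x) ` box l u"
  proof (intro set_eqI iffI)
    fix y assume "y \<in> (\<lambda>y. A *v y) -` box l u"
    moreover have "y = B *v (A *v y)" using AB by (simp add: matrix_vector_mul_assoc)
    ultimately show "y \<in> (\<lambda>x. B *v x) ` box l u" by blast
  next
    fix y assume "y \<in> (\<lambda>x. B *v x) ` box l u"
    then obtain x where "x \<in> box l u" "y = B *v x" by blast
    then show "y \<in> (\<lambda>y. A *v y) -` box l u" using AB by (simp add: matrix_vector_mul_assoc)
  qed
  have lm: "box l u \<in> lmeasurable" by simp
  have lin: "linear (\<lambda>x. B *v x)" by (simp add: matrix_vector_mul_linear)
  have m1: "(\<lambda>x. B *v x) ` box l u \<in> lmeasurable" using measurable_linear_image'[OF lin lm] .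
  have bs: "(\<lambda>x. B *v x) ` box l u \<in> sets borel"
    using pre[symmetric] by (metis (no_types) \<open>(\<lambda>y. A *v y) \<in> borel \<rightarrow>\<^sub>M borel\<close> measurable_sets_borel sets_lborel box_borel)
  have "emeasure lborel ((\<lambda>x. B *v x) ` box l u) = emeasure lebesgue ((\<lambda>x. B *v x) ` box l u)"
    using bs by (simp add: emeasure_completion)
  also have "\<dots> = ennreal (measure lebesgue ((\<lambda>x. B *v x) ` box l u))"
    using m1 by (simp add: emeasure_eq_measure2)
  also have "\<dots> = ennreal (\<bar>det B\<bar> * measure lebesgue (box l u))"
    using measure_linear_image'[OF lin lm] by simp
  finally have e1: "emeasure lborel ((\<lambda>x. B *v x) ` box l u) = ennreal (\<bar>det B\<bar> * measure lebesgue (box l u))" .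
  have mb: "measure lebesgue (box l u) = (\<Prod>b\<in>Basis. (u - l) \<bullet> b)"
    using le by (simp add: measure_lborel_box_eq)
  show "emeasure (density (distr lborel borel (\<lambda>y. A *v y)) (\<lambda>_. ennreal \<bar>det A\<bar>)) (box l u) = (\<Prod>b\<in>Basis. (u - l) \<bullet> b)"
  proof -
    have P0: "0 \<le> (\<Prod>b\<in>Basis. (u - l) \<bullet> b)" using le by (simp add: prod_nonneg inner_diff_left)
    have "emeasure (density (distr lborel borel (\<lambda>y. A *v y)) (\<lambda>_. ennreal \<bar>det A\<bar>)) (box l u)
        = ennreal \<bar>det A\<bar> * emeasure (distr lborel borel (\<lambda>y. A *v y)) (box l u)"
      by (simp add: emeasure_density nn_integral_cmult_indicator[symmetric] mult.commute)
    also have "\<dots> = ennreal \<bar>det A\<bar> * ennreal (\<bar>det B\<bar> * (\<Prod>b\<in>Basis. (u - l) \<bullet> b))"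
      by (simp add: emeasure_distr pre e1 mb)
    also have "\<dots> = ennreal ((\<bar>det A\<bar> * \<bar>det B\<bar>) * (\<Prod>b\<in>Basis. (u - l) \<bullet> b))"
      using P0 by (simp add: ennreal_mult[symmetric] mult.assoc)
    also have "\<dots> = (\<Prod>b\<in>Basis. (u - l) \<bullet> b)" using dAB P0 by simp
    finally show ?thesis .
  qed
qed simp


lemma linear_cov:
  fixes A :: "real^'n^'n" and f :: "real^'n \<Rightarrow> real"
  assumes "det A \<noteq> 0" and f[measurable]: "f \<in> borel_measurable lborel"
  shows "integrable lborel f \<longleftrightarrow> integrable lborel (\<lambda>y. f (A *v y))"
    and "integral\<^sup>L lborel f = \<bar>det A\<bar> * integral\<^sup>L lborel (\<lambda>y. f (A *v y))"
proof -
  have [measurable]: "(\<lambda>y. A *v y) \<in> borel \<rightarrow>\<^sub>M borel"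
    by (intro borel_measurable_continuous_onI linear_continuous_on matrix_vector_mul_bounded_linear)
  note L = lborel_linear[OF assms(1)]
  have "integrable lborel f \<longleftrightarrow> integrable (density (distr lborel borel (\<lambda>y. A *v y)) (\<lambda>_. ennreal \<bar>det A\<bar>)) f"
    using L by simp
  also have "\<dots> \<longleftrightarrow> integrable (distr lborel borel (\<lambda>y. A *v y)) (\<lambda>x. \<bar>det A\<bar> *\<^sub>R f x)"
    by (subst integrable_density) auto
  also have "\<dots> \<longleftrightarrow> integrable lborel (\<lambda>y. \<bar>det A\<bar> *\<^sub>R f (A *v y))"
    by (subst integrable_distr_eq) auto
  also have "\<dots> \<longleftrightarrow> integrable lborel (\<lambda>y. f (A *v y))"
    using assms(1) by simp
  finally show "integrable lborel f \<longleftrightarrow> integrable lborel (\<lambda>y. f (A *v y))" .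
  have "integral\<^sup>L lborel f = integral\<^sup>L (density (distr lborel borel (\<lambda>y. A *v y)) (\<lambda>_. ennreal \<bar>det A\<bar>)) f"
    using L by simp
  also have "\<dots> = integral\<^sup>L (distr lborel borel (\<lambda>y. A *v y)) (\<lambda>x. \<bar>det A\<bar> *\<^sub>R f x)"
    by (subst integral_density) auto
  also have "\<dots> = integral\<^sup>L lborel (\<lambda>y. \<bar>det A\<bar> *\<^sub>R f (A *v y))"
    by (subst integral_distr) auto
  also have "\<dots> = \<bar>det A\<bar> * integral\<^sup>L lborel (\<lambda>y. f (A *v y))"
    by simp
  finally show "integral\<^sup>L lborel f = \<bar>det A\<bar> * integral\<^sup>L lborel (\<lambda>y. f (A *v y))" .
qed

lemma translate_cov:
  fixes f :: "'a::euclidean_space \<Rightarrow> real" and c :: 'a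
  assumes f[measurable]: "f \<in> borel_measurable lborel"
  shows "integrable lborel f \<longleftrightarrow> integrable lborel (\<lambda>y. f (c + y))"
    and "integral\<^sup>L lborel f = integral\<^sup>L lborel (\<lambda>y. f (c + y))"
proof -
  have [measurable]: "(+) c \<in> borel \<rightarrow>\<^sub>M borel" by simp
  have L: "lborel = distr lborel borel ((+) c)" by (simp add: lborel_distr_plus)
  have "integrable lborel f \<longleftrightarrow> integrable (distr lborel borel ((+) c)) f" using L by simp
  also have "\<dots> \<longleftrightarrow> integrable lborel (\<lambda>y. f (c + y))" by (subst integrable_distr_eq) auto
  finally show "integrable lborel f \<longleftrightarrow> integrable lborel (\<lambda>y. f (c + y))" .
  have "integral\<^sup>L lborel f = integral\<^sup>L (distr lborel borel ((+) c)) f" using L by simp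
  also have "\<dots> = integral\<^sup>L lborel (\<lambda>y. f (c + y))" by (subst integral_distr) auto
  finally show "integral\<^sup>L lborel f = integral\<^sup>L lborel (\<lambda>y. f (c + y))" .
qed

lemma affine_cov:
  fixes A :: "real^'n^'n" and f :: "real^'n \<Rightarrow> real"
  assumes "det A \<noteq> 0" and f[measurable]: "f \<in> borel_measurable lborel"
  shows "integrable lborel f \<longleftrightarrow> integrable lborel (\<lambda>y. f (c + A *v y))"
    and "integral\<^sup>L lborel f = \<bar>det A\<bar> * integral\<^sup>L lborel (\<lambda>y. f (c + A *v y))"
proof -
  have m: "(\<lambda>y. f (c + y)) \<in> borel_measurable lborel" by measurable
  show "integrable lborel f \<longleftrightarrow> integrable lborel (\<lambda>y. f (c + A *v y))"
    using translate_cov(1)[OF f, of c] linear_cov(1)[OF assms(1) m] by simp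
  show "integral\<^sup>L lborel f = \<bar>det A\<bar> * integral\<^sup>L lborel (\<lambda>y. f (c + A *v y))"
    using translate_cov(2)[OF f, of c] linear_cov(2)[OF assms(1) m] by simp
qed


lemma matrix_inv_eq:
  fixes A B :: "real^'n^'n"
  assumes "A ** B = mat 1" "B ** A = mat 1"
  shows "matrix_inv A = B"
proof -
  have inv: "invertible A" using assms invertible_def by blast
  note I = invertible_inv[OF inv]
  have "matrix_inv A = matrix_inv A ** (A ** B)" using assms by simp
  also have "\<dots> = B" by (simp add: matrix_mul_assoc I)
  finally show ?thesis .
qed

lemma inner_mv_transpose:
  fixes A :: "real^'n^'n"
  shows "(A *v x) \<bullet> z = x \<bullet> (transpose A *v z)"
  by (metis dot_lmul_matrix vector_transpose_matrix)

lemma pd_inj: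
  fixes S :: "real^'n^'n"
  assumes "pos_def_sym S"
  shows "invertible S"
proof -
  have "inj ((*v) S)"
  proof (rule injI)
    fix x y assume "S *v x = S *v y"
    then have "S *v (x - y) = 0" by (simp add: matrix_vector_mult_diff_distrib)
    then have "(x - y) \<bullet> (S *v (x - y)) = 0" by simp
    moreover have "x - y \<noteq> 0 \<Longrightarrow> (x - y) \<bullet> (S *v (x - y)) > 0" using assms unfolding pos_def_sym_def by blast
    ultimately have "x - y = 0" by force
    then show "x = y" by simp
  qed
  then obtain B where B: "B ** S = mat 1" using matrix_left_invertible_injective by blast
  then have "S ** B = mat 1" using matrix_left_right_inverse by auto
  then show ?thesis using B unfolding invertible_def by blast
qed

lemma pd_inv:
  fixes S :: "real^'n^'n"
  assumes "pos_def_sym S"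
  shows "pos_def_sym (matrix_inv S)"
proof -
  define M where "M = matrix_inv S"
  have SM: "S ** M = mat 1" "M ** S = mat 1" using invertible_inv[OF pd_inj[OF assms]] M_def by auto
  have St: "transpose S = S" using assms pos_def_sym_def by blast
  have "transpose M ** S = mat 1"
    using arg_cong[OF SM(1), of transpose] by (simp add: matrix_transpose_mul St)
  then have "transpose M = M"
  proof -
    have "transpose M = transpose M ** (S ** M)" using SM by simp
    also have "\<dots> = (transpose M ** S) ** M" by (simp add: matrix_mul_assoc)
    finally show ?thesis using \<open>transpose M ** S = mat 1\<close> by simp
  qed
  moreover have "x \<bullet> (M *v x) > 0" if "x \<noteq> 0" for x
  proof -
    define y where "y = M *v x"
    have x: "x = S *v y" using SM y_def by (simp add: matrix_vector_mul_assoc)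
    then have "y \<noteq> 0" using that by auto
    then have "y \<bullet> (S *v y) > 0" using assms pos_def_sym_def by blast
    also have "y \<bullet> (S *v y) = x \<bullet> (M *v x)" using x y_def by (metis inner_commute)
    finally show ?thesis .
  qed
  ultimately show ?thesis unfolding pos_def_sym_def M_def[symmetric] by simp
qed


lemma sym_form:
  fixes M :: "real^'n^'n"
  assumes "transpose M = M"
  shows "x \<bullet> (M *v y) = y \<bullet> (M *v x)"
  by (metis assms inner_commute inner_mv_transpose)

lemma mortho_step:
  fixes M :: "real^'n^'n"
  assumes M: "pos_def_sym M" and fin: "finite B" and cB: "card B < CARD('n)"
    and orth: "\<forall>x\<in>B. \<forall>y\<in>B. x \<bullet> (M *v y) = (if x = y then 1 else 0)"
  shows "\<exists>u. u \<notin> B \<and> (\<forall>x\<in>insert u B. \<forall>y\<in>insert u B. x \<bullet> (M *v y) = (if x = y then 1 else 0))"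
proof -
  have Mt: "transpose M = M" and Mp: "\<And>x. x \<noteq> 0 \<Longrightarrow> x \<bullet> (M *v x) > 0"
    using M unfolding pos_def_sym_def by auto
  have "span B \<noteq> UNIV"
  proof
    assume "span B = UNIV"
    then have "dim (UNIV :: (real^'n) set) \<le> card B" using dim_le_card[of UNIV B] fin by auto
    then show False using cB by simp
  qed
  then obtain v where v: "v \<notin> span B" by auto
  define c where "c b = b \<bullet> (M *v v)" for b
  define w where "w = v - (\<Sum>b\<in>B. c b *\<^sub>R b)"
  have "w \<noteq> 0"
  proof
    assume "w = 0"
    then have "v = (\<Sum>b\<in>B. c b *\<^sub>R b)" unfolding w_def by simp
    moreover have "(\<Sum>b\<in>B. c b *\<^sub>R b) \<in> span B"
      by (intro span_sum span_scale span_base) 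
    ultimately show False using v by simp
  qed
  have ow: "b' \<bullet> (M *v w) = 0" if "b' \<in> B" for b'
  proof -
    have "b' \<bullet> (M *v w) = w \<bullet> (M *v b')" using sym_form[OF Mt] by blast
    also have "\<dots> = v \<bullet> (M *v b') - (\<Sum>b\<in>B. c b * (b \<bullet> (M *v b')))"
      unfolding w_def by (simp add: inner_diff_left inner_sum_left)
    also have "(\<Sum>b\<in>B. c b * (b \<bullet> (M *v b'))) = (\<Sum>b\<in>B. if b = b' then c b else 0)"
      using orth that by (intro sum.cong) auto
    also have "\<dots> = c b'" using that fin by simp
    also have "v \<bullet> (M *v b') = c b'" unfolding c_def using sym_form[OF Mt] by blast
    finally show ?thesis by simp
  qed
  define q where "q = w \<bullet> (M *v w)"
  have q: "q > 0" using Mp[OF \<open>w \<noteq> 0\<close>] q_def by simp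
  define u where "u = (1 / sqrt q) *\<^sub>R w"
  have uu: "u \<bullet> (M *v u) = 1"
    using q unfolding u_def q_def[symmetric]
    by (simp add: matrix_vector_mult_scaleR q_def[symmetric] real_sqrt_mult[symmetric] power2_eq_square[symmetric])
  have bu: "b \<bullet> (M *v u) = 0" if "b \<in> B" for b
    using ow[OF that] unfolding u_def by (simp add: matrix_vector_mult_scaleR)
  have ub: "u \<bullet> (M *v b) = 0" if "b \<in> B" for b
    using bu[OF that] sym_form[OF Mt] by metis
  have "u \<notin> B" using bu uu by force
  moreover have "\<forall>x\<in>insert u B. \<forall>y\<in>insert u B. x \<bullet> (M *v y) = (if x = y then 1 else 0)"
    using orth uu bu ub \<open>u \<notin> B\<close> by auto
  ultimately show ?thesis by blast
qed

lemma mortho_exists: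
  fixes M :: "real^'n^'n"
  assumes M: "pos_def_sym M"
  shows "\<exists>B. finite B \<and> card B = CARD('n) \<and> (\<forall>x\<in>B. \<forall>y\<in>B. x \<bullet> (M *v y) = (if x = y then 1 else 0))"
proof -
  have "\<forall>k. k \<le> CARD('n) \<longrightarrow> (\<exists>B. finite B \<and> card B = k \<and> (\<forall>x\<in>B. \<forall>y\<in>B. x \<bullet> (M *v y) = (if x = y then 1 else 0)))"
  proof (intro allI)
    fix k show "k \<le> CARD('n) \<longrightarrow> (\<exists>B. finite B \<and> card B = k \<and> (\<forall>x\<in>B. \<forall>y\<in>B. x \<bullet> (M *v y) = (if x = y then 1 else 0)))"
    proof (induction k)
      case 0
      show ?case by (intro impI exI[of _ "{}"]) auto
    next
      case (Suc k)
      show ?case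
      proof
        assume "Suc k \<le> CARD('n)"
        then obtain B where B: "finite B" "card B = k" "\<forall>x\<in>B. \<forall>y\<in>B. x \<bullet> (M *v y) = (if x = y then 1 else 0)"
          using Suc.IH by auto
        then obtain u where "u \<notin> B" "\<forall>x\<in>insert u B. \<forall>y\<in>insert u B. x \<bullet> (M *v y) = (if x = y then 1 else 0)"
          using mortho_step[OF M B(1) _ B(3)] \<open>Suc k \<le> CARD('n)\<close> by auto
        then show "\<exists>B. finite B \<and> card B = Suc k \<and> (\<forall>x\<in>B. \<forall>y\<in>B. x \<bullet> (M *v y) = (if x = y then 1 else 0))"
          using B by (intro exI[of _ "insert u B"]) auto
      qed
    qed
  qed
  then show ?thesis by auto
qed


lemma pd_sqrt:
  fixes S :: "real^'n^'n"
  assumes S: "pos_def_sym S"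
  shows "\<exists>U. det U \<noteq> 0 \<and> det S > 0 \<and> \<bar>det U\<bar> = sqrt (det S) \<and>
           (\<forall>y. (U *v y) \<bullet> (matrix_inv S *v (U *v y)) = y \<bullet> y)"
proof -
  define M where "M = matrix_inv S"
  have Mpd: "pos_def_sym M" using pd_inv[OF S] M_def by simp
  have SM: "S ** M = mat 1" "M ** S = mat 1" using invertible_inv[OF pd_inj[OF S]] M_def by auto
  obtain B where B: "finite B" "card B = CARD('n)" and orth: "\<forall>x\<in>B. \<forall>y\<in>B. x \<bullet> (M *v y) = (if x = y then 1 else 0)"
    using mortho_exists[OF Mpd] by blast
  obtain e where e: "bij_betw e (UNIV :: 'n set) B"
    using finite_same_card_bij[of "UNIV :: 'n set" B] B by auto
  have einj: "e i = e j \<longleftrightarrow> i = j" for i j using e unfolding bij_betw_def inj_on_def by auto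
  have eB: "e i \<in> B" for i using e unfolding bij_betw_def by auto
  define U :: "real^'n^'n" where "U = (\<chi> i j. e j $ i)"
  have G: "transpose U ** (M ** U) = mat 1"
  proof -
    have "(transpose U ** (M ** U)) $ i $ j = e i \<bullet> (M *v e j)" for i j
      by (simp add: U_def matrix_matrix_mult_def transpose_def inner_vec_def matrix_vector_mult_def
          sum_distrib_left mult.assoc)
    then show ?thesis using orth eB einj by (simp add: vec_eq_iff mat_def)
  qed
  have dG: "det U * (det M * det U) = 1"
    using arg_cong[OF G, of det] by (simp add: det_mul)
  have dSM: "det S * det M = 1"
    using arg_cong[OF SM(1), of det] by (simp add: det_mul)
  have dU: "(det U)^2 = det S"
  proof -
    have "(det U)^2 * det M = det S * det M" using dG dSM by (simp add: power2_eq_square algebra_simps)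
    moreover have "det M \<noteq> 0" using dSM by auto
    ultimately show ?thesis by simp
  qed
  have "det U \<noteq> 0" using dG by auto
  then have "det S > 0" using dU by (metis zero_less_power2)
  moreover have "\<bar>det U\<bar> = sqrt (det S)" using dU by (metis real_sqrt_abs)
  moreover have "(U *v y) \<bullet> (M *v (U *v y)) = y \<bullet> y" for y
  proof -
    have "(U *v y) \<bullet> (M *v (U *v y)) = y \<bullet> (transpose U *v (M *v (U *v y)))"
      by (rule inner_mv_transpose)
    also have "\<dots> = y \<bullet> ((transpose U ** (M ** U)) *v y)"
      by (simp add: matrix_vector_mul_assoc)
    finally show ?thesis using G by simp
  qed
  ultimately show ?thesis using \<open>det U \<noteq> 0\<close> M_def by blast
qed


lemma integrable_powr_tail:
  fixes e :: real assumes "e < -1"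
  shows "integrable lborel (\<lambda>t::real. indicator {1..} t * t powr e)"
proof -
  have "((\<lambda>x. x powr e) has_integral -(1 powr (e+1)) / (e+1)) {1..}"
    using has_integral_powr_to_inf[OF assms, of 1] by simp
  then have "(\<lambda>x. x powr e) integrable_on {1..}" by blast
  then have "(\<lambda>x. x powr e) absolutely_integrable_on {1..}"
    by (rule nonnegative_absolutely_integrable_1) simp
  then have "integrable lebesgue (\<lambda>t::real. indicator {1..} t *\<^sub>R t powr e)"
    unfolding set_integrable_def .
  then have "integrable lborel (\<lambda>t::real. indicator {1..} t *\<^sub>R t powr e)"
    by (subst (asm) integrable_completion) auto
  then show ?thesis by simp
qed

lemma integrable_1d:
  fixes r :: real assumes "r > 1/2"
  shows "integrable lborel (\<lambda>t::real. (1 + t^2) powr (-r))"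
proof -
  define D where "D t = indicator {-1..1} t + indicator {1..} t * t powr (-2*r)
     + indicator {1..} (-t) * (-t) powr (-2*r)" for t :: real
  have i1: "integrable lborel (\<lambda>t::real. indicator {1..} t * t powr (-2*r))"
    using integrable_powr_tail[of "-2*r"] assms by simp
  have i2: "integrable lborel (\<lambda>t::real. indicator {1..} (-t) * (-t) powr (-2*r))"
    using lborel_integrable_real_affine[OF i1, of "-1" 0] by simp
  have i0: "integrable lborel (\<lambda>t::real. indicator {-1..1} t :: real)"
    by (simp add: integrable_real_indicator)
  have iD: "integrable lborel D"
    unfolding D_def by (intro Bochner_Integration.integrable_add i0 i1 i2)
  show ?thesis
  proof (rule Bochner_Integration.integrable_bound[OF iD])
    show "(\<lambda>t::real. (1 + t^2) powr (-r)) \<in> borel_measurable lborel" by measurable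
    show "AE x in lborel. norm ((1 + x^2) powr (-r)) \<le> norm (D x)"
    proof (rule AE_I2)
      fix t :: real
      have D0: "0 \<le> indicator {1..} t * t powr (-2*r)" "0 \<le> indicator {1..} (-t) * (-t) powr (-2*r)"
        by (auto simp: indicator_def)
      have pos: "0 < 1 + t^2" by (simp add: add_pos_nonneg)
      have le1: "(1 + t^2) powr (-r) \<le> 1"
        using powr_mono2'[of "-r" 1 "1+t^2"] assms by simp
      have "(1 + t^2) powr (-r) \<le> D t"
      proof (cases "\<bar>t\<bar> \<le> 1")
        case True
        then have "D t \<ge> 1" using D0 unfolding D_def by (auto simp: indicator_def)
        then show ?thesis using le1 by linarith
      next
        case False
        then have a: "0 < \<bar>t\<bar>" by simp
        have "(1 + t^2) powr (-r) \<le> (\<bar>t\<bar>^2) powr (-r)"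
          using powr_mono2'[of "-r" "\<bar>t\<bar>^2" "1+t^2"] assms a by simp
        also have "(\<bar>t\<bar>^2) powr (-r) = \<bar>t\<bar> powr (-2*r)"
        proof -
          have e: "\<bar>t\<bar>^2 = \<bar>t\<bar> powr 2" using a by (simp add: powr_realpow)
          show ?thesis unfolding e powr_powr by simp
        qed
        finally have *: "(1 + t^2) powr (-r) \<le> \<bar>t\<bar> powr (-2*r)" .
        show ?thesis
        proof (cases "t > 1")
          case True
          then show ?thesis using * D0 unfolding D_def by (simp add: indicator_def)
        next
          case False
          then have "t < -1" using \<open>\<not> \<bar>t\<bar> \<le> 1\<close> by auto
          then show ?thesis using * D0 unfolding D_def by (simp add: indicator_def)
        qed
      qed
      moreover have "0 \<le> D t" using D0 unfolding D_def by (simp add: indicator_def)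
      ultimately show "norm ((1 + t^2) powr (-r)) \<le> norm (D t)" by simp
    qed
  qed
qed

lemma integrable_prod_basis:
  fixes h :: "real \<Rightarrow> real"
  assumes h: "integrable lborel h" and h0: "\<And>t. 0 \<le> h t"
  shows "integrable lborel (\<lambda>y::'a::euclidean_space. \<Prod>b\<in>Basis. h (y \<bullet> b))"
proof -
  have hm[measurable]: "h \<in> borel_measurable borel" using h by (simp add: borel_measurable_integrable)
  show ?thesis
  proof (unfold integrable_iff_bounded, intro conjI)
    show "(\<lambda>y::'a. \<Prod>b\<in>Basis. h (y \<bullet> b)) \<in> borel_measurable lborel" by measurable
    have "(\<integral>\<^sup>+ y. ennreal (norm (\<Prod>b\<in>Basis. h (y \<bullet> b))) \<partial>(lborel :: 'a measure))
        = (\<integral>\<^sup>+ y. (\<Prod>b\<in>Basis. ennreal (h (y \<bullet> b))) \<partial>(lborel :: 'a measure))"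
    proof (intro nn_integral_cong)
      fix y :: 'a
      have "norm (\<Prod>b\<in>Basis. h (y \<bullet> b)) = (\<Prod>b\<in>Basis. h (y \<bullet> b))"
        using h0 by (simp add: prod_nonneg)
      then show "ennreal (norm (\<Prod>b\<in>Basis. h (y \<bullet> b))) = (\<Prod>b\<in>Basis. ennreal (h (y \<bullet> b)))"
        using h0 by (simp add: prod_ennreal)
    qed
    also have "\<dots> = (\<Prod>b\<in>(Basis::'a set). \<integral>\<^sup>+ t. ennreal (h t) \<partial>lborel)"
      by (rule nn_integral_lborel_prod) (auto simp: h0)
    also have "\<dots> < \<infinity>"
    proof -
      have "(\<integral>\<^sup>+ t. ennreal (h t) \<partial>lborel) < \<infinity>"
        using h h0 unfolding integrable_iff_bounded by simp
      then show ?thesis by (simp add: less_top[symmetric] ennreal_prod_eq_top power_eq_top_ennreal)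
    qed
    finally show "(\<integral>\<^sup>+ y. ennreal (norm (\<Prod>b\<in>Basis. h (y \<bullet> b))) \<partial>(lborel :: 'a measure)) < \<infinity>" .
  qed
qed

lemma integrable_student_std:
  fixes \<nu> s :: real
  assumes nu: "\<nu> > 0" and s: "s > real DIM('a::euclidean_space) / 2"
  shows "integrable lborel (\<lambda>y::'a. (1 + (y \<bullet> y) / \<nu>) powr (-s))"
proof -
  define d where "d = real DIM('a)"
  have d0: "d > 0" unfolding d_def by simp
  define r where "r = s / d"
  have r: "r > 1/2" using s d0 unfolding r_def d_def by (simp add: field_simps)
  define h where "h t = (1 + t^2) powr (-r)" for t :: real
  define m where "m = min 1 (1/\<nu>)"
  have m0: "m > 0" using nu unfolding m_def by simp
  define K where "K = m powr (-s)"
  have iP: "integrable lborel (\<lambda>y::'a. \<Prod>b\<in>Basis. h (y \<bullet> b))"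
    using integrable_prod_basis[OF integrable_1d[OF r]] unfolding h_def by simp
  have iK: "integrable lborel (\<lambda>y::'a. K * (\<Prod>b\<in>Basis. h (y \<bullet> b)))"
    using iP by simp
  show ?thesis
  proof (rule Bochner_Integration.integrable_bound[OF iK])
    show "(\<lambda>y::'a. (1 + (y \<bullet> y) / \<nu>) powr (-s)) \<in> borel_measurable lborel" by measurable
    show "AE y in lborel. norm ((1 + ((y::'a) \<bullet> y) / \<nu>) powr (-s)) \<le> norm (K * (\<Prod>b\<in>Basis. h (y \<bullet> b)))"
    proof (rule AE_I2)
      fix y :: 'a
      have yy: "0 \<le> y \<bullet> y" by simp
      have s0: "s > 0" using s d0 d_def by linarith
      have A: "m * (1 + y \<bullet> y) \<le> 1 + (y \<bullet> y) / \<nu>"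
      proof -
        have "m \<le> 1" "m \<le> 1/\<nu>" unfolding m_def by auto
        have "m * (y \<bullet> y) \<le> (1/\<nu>) * (y \<bullet> y)"
          using yy \<open>m \<le> 1/\<nu>\<close> by (rule mult_right_mono[rotated])
        then show ?thesis using \<open>m \<le> 1\<close> by (simp add: algebra_simps)
      qed
      have pos1: "0 < m * (1 + y \<bullet> y)" using m0 yy by (simp add: add_pos_nonneg)
      have "(1 + (y \<bullet> y) / \<nu>) powr (-s) \<le> (m * (1 + y \<bullet> y)) powr (-s)"
        using powr_mono2'[of "-s", OF _ pos1 A] s0 by simp
      also have "\<dots> = K * (1 + y \<bullet> y) powr (-s)"
        unfolding K_def using m0 yy by (simp add: powr_mult)
      also have "(1 + y \<bullet> y) powr (-s) \<le> (\<Prod>b\<in>Basis. h (y \<bullet> b))"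
      proof -
        have pb: "\<And>b. b \<in> Basis \<Longrightarrow> 0 < 1 + (y \<bullet> b)^2" by (simp add: add_pos_nonneg)
        have "(\<Prod>b\<in>(Basis::'a set). 1 + (y \<bullet> b)^2) \<le> (\<Prod>b\<in>(Basis::'a set). 1 + y \<bullet> y)"
        proof (rule prod_mono)
          fix b :: 'a assume b: "b \<in> Basis"
          have "\<bar>y \<bullet> b\<bar> \<le> norm y" using Basis_le_norm[OF b] .
          then have "(y \<bullet> b)^2 \<le> (norm y)^2"
            by (metis abs_ge_zero power2_abs power_mono)
          then show "0 \<le> 1 + (y \<bullet> b)^2 \<and> 1 + (y \<bullet> b)^2 \<le> 1 + y \<bullet> y"
            by (simp add: power2_norm_eq_inner)
        qed
        also have "\<dots> = (1 + y \<bullet> y) ^ DIM('a)" by simp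
        finally have P: "(\<Prod>b\<in>(Basis::'a set). 1 + (y \<bullet> b)^2) \<le> (1 + y \<bullet> y) ^ DIM('a)" .
        have Ppos: "0 < (\<Prod>b\<in>(Basis::'a set). 1 + (y \<bullet> b)^2)" using pb by (simp add: prod_pos)
        have "(1 + y \<bullet> y) powr (-s) = ((1 + y \<bullet> y) ^ DIM('a)) powr (-r)"
          using yy d0 unfolding r_def d_def
          by (simp add: powr_realpow[symmetric] powr_powr add_pos_nonneg)
        also have "\<dots> \<le> (\<Prod>b\<in>(Basis::'a set). 1 + (y \<bullet> b)^2) powr (-r)"
          using powr_mono2'[of "-r", OF _ Ppos P] r by simp
        also have "\<dots> = (\<Prod>b\<in>Basis. h (y \<bullet> b))"
          unfolding h_def by (rule prod_powr_distrib)
        finally show ?thesis .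
      qed
      then have "K * (1 + y \<bullet> y) powr (-s) \<le> K * (\<Prod>b\<in>Basis. h (y \<bullet> b))"
        unfolding K_def by (intro mult_left_mono) auto
      finally have "(1 + (y \<bullet> y) / \<nu>) powr (-s) \<le> K * (\<Prod>b\<in>Basis. h (y \<bullet> b))" .
      moreover have "0 \<le> K * (\<Prod>b\<in>Basis. h (y \<bullet> b))"
        unfolding K_def h_def by (simp add: prod_nonneg)
      ultimately show "norm ((1 + (y \<bullet> y) / \<nu>) powr (-s)) \<le> norm (K * (\<Prod>b\<in>Basis. h (y \<bullet> b)))"
        by simp
    qed
  qed
qed


lemma scale_cov:
  fixes f :: "real^'n \<Rightarrow> real" and c :: real
  assumes "c > 0" and f[measurable]: "f \<in> borel_measurable lborel"
  shows "integrable lborel f \<longleftrightarrow> integrable lborel (\<lambda>y. f (c *\<^sub>R y))"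
    and "integral\<^sup>L lborel f = c ^ CARD('n) * integral\<^sup>L lborel (\<lambda>y. f (c *\<^sub>R y))"
proof -
  define A :: "real^'n^'n" where "A = matrix (\<lambda>y. c *\<^sub>R y)"
  have Av: "A *v y = c *\<^sub>R y" for y unfolding A_def
    by (simp add: matrix_works linear_scaleR)
  have dA: "det A = c ^ CARD('n)" unfolding A_def by simp
  have d0: "det A \<noteq> 0" using dA assms by simp
  show "integrable lborel f \<longleftrightarrow> integrable lborel (\<lambda>y. f (c *\<^sub>R y))"
    using linear_cov(1)[OF d0 f] by (simp add: Av)
  show "integral\<^sup>L lborel f = c ^ CARD('n) * integral\<^sup>L lborel (\<lambda>y. f (c *\<^sub>R y))"
    using linear_cov(2)[OF d0 f] assms by (simp add: Av dA)
qed

lemma nonint_scaling: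
  fixes w :: "real^'n" and \<nu> s :: real
  assumes w: "w \<noteq> 0" and nu: "\<nu> > 0" and s: "s > 0" and sd: "2 * s \<le> real CARD('n) + 2"
  shows "\<not> integrable lborel (\<lambda>y. (w \<bullet> y)^2 * (1 + (y \<bullet> y) / \<nu>) powr (-s))"
proof
  define f where "f y = (w \<bullet> y)^2 * (1 + (y \<bullet> y) / \<nu>) powr (-s)" for y :: "real^'n"
  have fm[measurable]: "f \<in> borel_measurable lborel" unfolding f_def by measurable
  assume "integrable lborel (\<lambda>y. (w \<bullet> y)^2 * (1 + (y \<bullet> y) / \<nu>) powr (-s))"
  then have fi: "integrable lborel f" unfolding f_def .
  define I where "I = integral\<^sup>L lborel f"
  define J where "J = integral\<^sup>L lborel (\<lambda>y. f (2 *\<^sub>R y))"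
  have f2i: "integrable lborel (\<lambda>y. f (2 *\<^sub>R y))" using scale_cov(1)[of 2 f] fi by simp
  have IJ: "I = 2 ^ CARD('n) * J" using scale_cov(2)[of 2 f] unfolding I_def J_def by simp
  have I0: "I \<ge> 0" unfolding I_def f_def by (intro integral_nonneg_AE) auto
  define q where "q = (2::real) powr (2 - 2 * s)"
  define g where "g y = f (2 *\<^sub>R y) - q * f y" for y
  have gi: "integrable lborel g" unfolding g_def using f2i fi by auto
  have key: "q * f y \<le> f (2 *\<^sub>R y) \<and> (w \<bullet> y \<noteq> 0 \<longrightarrow> q * f y < f (2 *\<^sub>R y))" for y
  proof -
    define t where "t = (y \<bullet> y) / \<nu>"
    have t0: "t \<ge> 0" unfolding t_def using nu by simp
    have lt: "1 + 4 * t < 4 * (1 + t)" by simp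
    have p1: "0 < 1 + 4 * t" using t0 by simp
    have "(4 * (1 + t)) powr (-s) < (1 + 4 * t) powr (-s)"
      using powr_less_mono2_neg[of "-s" "1 + 4*t" "4*(1+t)"] s p1 lt by simp
    moreover have "(4 * (1 + t)) powr (-s) = 4 powr (-s) * (1 + t) powr (-s)"
      by (rule powr_mult)
    ultimately have A: "4 powr (-s) * (1 + t) powr (-s) < (1 + 4 * t) powr (-s)" by simp
    have q4: "q = 4 * 4 powr (-s)"
    proof -
      have "(4::real) powr (-s) = 2 powr (-2 * s)" using powr_powr[of 2 2 "-s"] by simp
      then show ?thesis unfolding q_def by (simp add: powr_add powr_diff powr_minus divide_inverse)
    qed
    have f2: "f (2 *\<^sub>R y) = 4 * (w \<bullet> y)^2 * (1 + 4 * t) powr (-s)"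
      unfolding f_def t_def by (simp add: power2_eq_square algebra_simps)
    have f1: "q * f y = 4 * (w \<bullet> y)^2 * (4 powr (-s) * (1 + t) powr (-s))"
      unfolding f_def t_def q4 by (simp add: algebra_simps)
    have "(w \<bullet> y)^2 \<ge> 0" by simp
    then have le: "q * f y \<le> f (2 *\<^sub>R y)" using A unfolding f1 f2 by (intro mult_left_mono) auto
    moreover have "w \<bullet> y \<noteq> 0 \<longrightarrow> q * f y < f (2 *\<^sub>R y)"
    proof
      assume "w \<bullet> y \<noteq> 0"
      then have "4 * (w \<bullet> y)^2 > 0" by simp
      then show "q * f y < f (2 *\<^sub>R y)" using A unfolding f1 f2 by (intro mult_strict_left_mono) auto
    qed
    ultimately show ?thesis by blast
  qed
  have gpos: "integral\<^sup>L lborel g > 0"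
  proof -
    have g0: "AE y in lborel. 0 \<le> g y" using key unfolding g_def by (auto simp: algebra_simps)
    have "integral\<^sup>L lborel g \<noteq> 0"
    proof
      assume "integral\<^sup>L lborel g = 0"
      then have "AE y in lborel. g y = 0" using integral_nonneg_eq_0_iff_AE[OF gi g0] by simp
      moreover have "AE y in lborel. w \<bullet> y \<noteq> 0"
      proof -
        have "negligible {y. w \<bullet> y = 0}" using negligible_hyperplane[of w 0] w by simp
        then have "{y. w \<bullet> y = 0} \<in> null_sets lebesgue" using negligible_iff_null_sets by blast
        then have "AE y in lebesgue. y \<notin> {y. w \<bullet> y = 0}" by (rule AE_not_in)
        then show ?thesis by (simp add: AE_completion_iff)
      qed
      ultimately have "AE y in lborel. y \<in> ({} :: (real^'n) set)"
      proof eventually_elim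
        case (elim y) then show ?case using key[of y] unfolding g_def by auto
      qed
      then have "AE y in (lborel :: (real^'n) measure). False" by simp
      then have "emeasure (lborel :: (real^'n) measure) UNIV = 0"
        using AE_iff_measurable[of UNIV "lborel :: (real^'n) measure" "\<lambda>_. False"] by simp
      then show False by simp
    qed
    moreover have "integral\<^sup>L lborel g \<ge> 0" using g0 by (intro integral_nonneg_AE)
    ultimately show ?thesis by simp
  qed
  have "integral\<^sup>L lborel g = J - q * I" unfolding g_def J_def I_def using f2i fi by simp
  also have "\<dots> = I / 2 ^ CARD('n) - q * I" using IJ by simp
  also have "\<dots> \<le> 0"
  proof -
    have "1 / (2::real) ^ CARD('n) = 2 powr (- real CARD('n))"
      by (simp add: powr_minus powr_realpow divide_inverse)
    also have "\<dots> \<le> q" unfolding q_def using sd by (intro powr_mono) auto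
    finally have "1 / (2::real) ^ CARD('n) \<le> q" .
    then have "I * (1 / 2 ^ CARD('n)) \<le> I * q" using I0 by (intro mult_left_mono)
    then show ?thesis by (simp add: algebra_simps)
  qed
  finally show False using gpos by simp
qed


lemma mv_measurable[measurable]:
  fixes A :: "real^'n^'m"
  shows "(\<lambda>x. A *v x) \<in> borel_measurable borel"
  by (intro borel_measurable_continuous_onI linear_continuous_on matrix_vector_mul_bounded_linear)

lemma vec_nth_measurable[measurable]:
  "(\<lambda>x::real^'n. x $ i) \<in> borel_measurable borel"
  by (intro borel_measurable_continuous_onI linear_continuous_on bounded_linear_vec_nth)

lemma kernel_measurable[measurable]:
  "student_kernel \<nu> \<mu> S \<in> borel_measurable lborel"
  unfolding student_kernel_def[abs_def] by measurable

lemma matrix_inv_mat1: "matrix_inv (mat 1 :: real^'n^'n) = mat 1"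
  by (rule matrix_inv_eq) simp_all

lemma kernel_std: "student_kernel \<nu> 0 (mat 1) y = (1 + (y \<bullet> y) / \<nu>) powr (-(\<nu> + real CARD('n)) / 2)"
  for y :: "real^'n"
  by (simp add: student_kernel_def matrix_inv_mat1)

lemma kernel_at:
  fixes U S :: "real^'n^'n"
  assumes "\<forall>y. (U *v y) \<bullet> (matrix_inv S *v (U *v y)) = y \<bullet> y"
  shows "student_kernel \<nu> \<mu> S (\<mu> + U *v y) = (1 + (y \<bullet> y) / \<nu>) powr (-(\<nu> + real CARD('n)) / 2)"
  using assms by (simp add: student_kernel_def)

lemma kernel_std_integrable:
  assumes "\<nu> > 0"
  shows "integrable lborel (student_kernel \<nu> 0 (mat 1) :: real^'n \<Rightarrow> real)"
proof -
  have e: "-(\<nu> + real CARD('n)) / 2 = -((\<nu> + real CARD('n)) / 2)" by (simp only: minus_divide_left)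
  show ?thesis unfolding kernel_std[abs_def] e
    using integrable_student_std[where 'a="real^'n", of \<nu> "(\<nu> + real CARD('n)) / 2"] assms by simp
qed

lemma integral_pos_everywhere:
  fixes f :: "real^'n \<Rightarrow> real"
  assumes fi: "integrable lborel f" and fp: "\<And>x. f x > 0"
  shows "integral\<^sup>L lborel f > 0"
proof -
  have g0: "AE y in lborel. 0 \<le> f y" using fp by (simp add: less_imp_le)
  have "integral\<^sup>L lborel f \<noteq> 0"
  proof
    assume "integral\<^sup>L lborel f = 0"
    then have "AE y in lborel. f y = 0" using integral_nonneg_eq_0_iff_AE[OF fi g0] by simp
    then have "AE y in lborel. y \<in> ({} :: (real^'n) set)"
    proof eventually_elim
      case (elim y) then show ?case using fp[of y] by simp
    qed
    then have "AE y in (lborel :: (real^'n) measure). False" by simp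
    then have "emeasure (lborel :: (real^'n) measure) UNIV = 0"
      using AE_iff_measurable[of UNIV "lborel :: (real^'n) measure" "\<lambda>_. False"] by simp
    then show False by simp
  qed
  moreover have "integral\<^sup>L lborel f \<ge> 0" using g0 by (intro integral_nonneg_AE)
  ultimately show ?thesis by simp
qed

lemma kernel_pos:
  assumes "pos_def_sym S" "\<nu> > 0"
  shows "student_kernel \<nu> \<mu> S x > 0"
proof -
  have M: "pos_def_sym (matrix_inv S)" using pd_inv[OF assms(1)] .
  have "(x - \<mu>) \<bullet> (matrix_inv S *v (x - \<mu>)) \<ge> 0"
  proof (cases "x - \<mu> = 0")
    case True then show ?thesis by simp
  next
    case False then show ?thesis using M unfolding pos_def_sym_def by (simp add: less_imp_le)
  qed
  then have "1 + (1/\<nu>) * ((x - \<mu>) \<bullet> (matrix_inv S *v (x - \<mu>))) > 0"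
    using assms(2) by (simp add: add_pos_nonneg)
  then show ?thesis unfolding student_kernel_def by simp
qed

lemma Z_pos:
  assumes "\<nu> > 0"
  shows "integral\<^sup>L lborel (student_kernel \<nu> 0 (mat 1) :: real^'n \<Rightarrow> real) > 0"
proof (rule integral_pos_everywhere[OF kernel_std_integrable[OF assms]])
  have "pos_def_sym (mat 1 :: real^'n^'n)" unfolding pos_def_sym_def by simp
  then show "student_kernel \<nu> 0 (mat 1) x > 0" for x :: "real^'n" using kernel_pos assms by blast
qed

lemma kernel_integral:
  fixes S :: "real^'n^'n"
  assumes S: "pos_def_sym S" and nu: "\<nu> > 0"
  shows "integrable lborel (student_kernel \<nu> \<mu> S)"
    and "integral\<^sup>L lborel (student_kernel \<nu> \<mu> S) = sqrt (det S) * integral\<^sup>L lborel (student_kernel \<nu> 0 (mat 1) :: real^'n \<Rightarrow> real)"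
proof -
  obtain U where U: "det U \<noteq> 0" "\<bar>det U\<bar> = sqrt (det S)"
    and Q: "\<forall>y. (U *v y) \<bullet> (matrix_inv S *v (U *v y)) = y \<bullet> y"
    using pd_sqrt[OF S] by blast
  have eq: "(\<lambda>y. student_kernel \<nu> \<mu> S (\<mu> + U *v y)) = (student_kernel \<nu> 0 (mat 1) :: real^'n \<Rightarrow> real)"
    using kernel_at[OF Q] by (simp add: kernel_std[abs_def])
  show "integrable lborel (student_kernel \<nu> \<mu> S)"
    using affine_cov(1)[OF U(1) kernel_measurable, of \<nu> \<mu> S \<mu>] eq kernel_std_integrable[OF nu] by simp
  show "integral\<^sup>L lborel (student_kernel \<nu> \<mu> S) = sqrt (det S) * integral\<^sup>L lborel (student_kernel \<nu> 0 (mat 1) :: real^'n \<Rightarrow> real)"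
    using affine_cov(2)[OF U(1) kernel_measurable, of \<nu> \<mu> S \<mu>] eq U(2) by simp
qed

lemma density_pos:
  assumes "pos_def_sym S" "\<nu> > 0"
  shows "student_density \<nu> \<mu> S x > 0"
proof -
  have "det S > 0" using pd_sqrt[OF assms(1)] by blast
  then have "det S powr (-1/2) > 0" by simp
  then show ?thesis unfolding student_density_def
    using Z_pos[OF assms(2)] kernel_pos[OF assms] by (intro mult_pos_pos) auto
qed


lemma exp_eq: "-(\<nu> + real CARD('n)) / 2 = -((\<nu> + real CARD('n)) / 2)"
  by (simp only: minus_divide_left)

lemma sq_ineq: "(a + b) * (a + b) \<le> 2 * a^2 + 2 * b^2" for a b :: real
proof -
  have "0 \<le> (a - b) * (a - b)" by simp
  then show ?thesis by (simp add: power2_eq_square algebra_simps)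
qed

lemma kernel_moment_pos:
  fixes S :: "real^'n^'n"
  assumes S: "pos_def_sym S" and nu: "\<nu> > 2"
  shows "integrable lborel (\<lambda>x. x$i * x$j * student_kernel \<nu> \<mu> S x)"
proof -
  obtain U where U: "det U \<noteq> 0" and Q: "\<forall>y. (U *v y) \<bullet> (matrix_inv S *v (U *v y)) = y \<bullet> y"
    using pd_sqrt[OF S] by blast
  define F where "F x = x$i * x$j * student_kernel \<nu> \<mu> S x" for x
  have Fm: "F \<in> borel_measurable lborel" unfolding F_def by measurable
  obtain K where K: "K > 0" "\<And>y. norm (U *v y) \<le> norm y * K"
    using bounded_linear.pos_bounded[OF matrix_vector_mul_bounded_linear[of U]] by blast
  define a where "a = norm \<mu>"
  define L where "L = 2 * a^2 + 2 * K^2 * \<nu>"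
  define s where "s = (\<nu> + real CARD('n)) / 2 - 1"
  have s: "s > real DIM(real^'n) / 2" using nu unfolding s_def by (simp add: field_simps)
  have iB: "integrable lborel (\<lambda>y::real^'n. L * (1 + (y \<bullet> y) / \<nu>) powr (-s))"
    using integrable_student_std[OF _ s] nu by simp
  have "integrable lborel (\<lambda>y. F (\<mu> + U *v y))"
  proof (rule Bochner_Integration.integrable_bound[OF iB])
    show "(\<lambda>y. F (\<mu> + U *v y)) \<in> borel_measurable lborel" using Fm by measurable
    show "AE y in lborel. norm (F (\<mu> + U *v y)) \<le> norm (L * (1 + (y \<bullet> y) / \<nu>) powr (-s))"
    proof (rule AE_I2)
      fix y :: "real^'n"
      define t where "t = (y \<bullet> y) / \<nu>"
      have t0: "t \<ge> 0" using nu unfolding t_def by simp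
      have ny: "norm y ^ 2 = y \<bullet> y" by (simp add: power2_norm_eq_inner)
      define x where "x = \<mu> + U *v y"
      have nx: "norm x \<le> a + K * norm y"
        unfolding x_def a_def using norm_triangle_ineq[of \<mu> "U *v y"] K(2)[of y] by (simp add: mult.commute)
      have xi: "\<bar>x$i\<bar> \<le> a + K * norm y" using component_le_norm_cart[of x i] nx by simp
      have xj: "\<bar>x$j\<bar> \<le> a + K * norm y" using component_le_norm_cart[of x j] nx by simp
      have "\<bar>x$i * x$j\<bar> \<le> (a + K * norm y) * (a + K * norm y)"
        unfolding abs_mult using K(1) xi xj unfolding a_def by (intro mult_mono) auto
      also have "\<dots> \<le> 2 * a^2 + 2 * K^2 * (norm y)^2"
        using sq_ineq[of a "K * norm y"] by (simp add: power_mult_distrib)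
      also have "\<dots> \<le> L * (1 + t)"
      proof -
        have "2 * K^2 * (norm y)^2 = 2 * K^2 * \<nu> * t" unfolding t_def ny using nu by simp
        moreover have "L * (1 + t) = 2 * a^2 + 2 * K^2 * \<nu> * t + (2 * a^2 * t + 2 * K^2 * \<nu>)"
          unfolding L_def by (simp add: algebra_simps)
        moreover have "0 \<le> 2 * a^2 * t + 2 * K^2 * \<nu>" using t0 nu by simp
        ultimately show ?thesis by linarith
      qed
      finally have A: "\<bar>x$i * x$j\<bar> \<le> L * (1 + t)" .
      have kx: "student_kernel \<nu> \<mu> S x = (1 + t) powr (-(\<nu> + real CARD('n)) / 2)"
        unfolding x_def t_def using kernel_at[OF Q] by simp
      have kpos: "0 \<le> (1 + t) powr (-(\<nu> + real CARD('n)) / 2)" by simp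
      have "norm (F x) = \<bar>x$i * x$j\<bar> * (1 + t) powr (-(\<nu> + real CARD('n)) / 2)"
        unfolding F_def kx by (simp add: abs_mult)
      also have "\<dots> \<le> L * (1 + t) * (1 + t) powr (-(\<nu> + real CARD('n)) / 2)"
        using A kpos by (rule mult_right_mono)
      also have "L * (1 + t) * (1 + t) powr (-(\<nu> + real CARD('n)) / 2) = L * (1 + t) powr (-s)"
      proof -
        have ee: "-s = 1 + (-(\<nu> + real CARD('n)) / 2)" unfolding s_def by (simp add: field_simps)
        have "(1 + t) powr (-s) = (1 + t) powr (1 + (-(\<nu> + real CARD('n)) / 2))"
          by (simp only: ee)
        also have "\<dots> = (1 + t) * (1 + t) powr (-(\<nu> + real CARD('n)) / 2)"
          using t0 by (simp add: powr_add)
        finally show ?thesis by (simp add: mult.assoc)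
      qed
      finally have "norm (F x) \<le> L * (1 + t) powr (-s)" .
      moreover have "L \<ge> 0" unfolding L_def using nu by simp
      ultimately show "norm (F (\<mu> + U *v y)) \<le> norm (L * (1 + (y \<bullet> y) / \<nu>) powr (-s))"
        unfolding x_def t_def by simp
    qed
  qed
  then show ?thesis using affine_cov(1)[OF U Fm, of \<mu>] unfolding F_def by simp
qed


lemma abs_le_sq: "\<bar>t\<bar> \<le> 1 + t * t" for t :: real
proof -
  have "0 \<le> (\<bar>t\<bar> - 1) * (\<bar>t\<bar> - 1)" by simp
  then have "2 * \<bar>t\<bar> \<le> \<bar>t\<bar> * \<bar>t\<bar> + 1" by (simp add: algebra_simps)
  moreover have "\<bar>t\<bar> * \<bar>t\<bar> = t * t" by (rule abs_mult_self_eq)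
  moreover have "0 \<le> t * t" by simp
  ultimately show ?thesis by linarith
qed

lemma first_moment:
  fixes S :: "real^'n^'n"
  assumes S: "pos_def_sym S" and nu: "\<nu> > 0"
    and ii: "integrable lborel (\<lambda>x. x$i * x$i * student_kernel \<nu> \<mu> S x)"
  shows "integrable lborel (\<lambda>x. x$i * student_kernel \<nu> \<mu> S x)"
proof -
  have ki: "integrable lborel (student_kernel \<nu> \<mu> S)" using kernel_integral(1)[OF S nu] .
  have iB: "integrable lborel (\<lambda>x. student_kernel \<nu> \<mu> S x + x$i * x$i * student_kernel \<nu> \<mu> S x)"
    using ki ii by simp
  show ?thesis
  proof (rule Bochner_Integration.integrable_bound[OF iB])
    show "(\<lambda>x. x$i * student_kernel \<nu> \<mu> S x) \<in> borel_measurable lborel" by measurable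
    show "AE x in lborel. norm (x$i * student_kernel \<nu> \<mu> S x) \<le> norm (student_kernel \<nu> \<mu> S x + x$i * x$i * student_kernel \<nu> \<mu> S x)"
    proof (rule AE_I2)
      fix x :: "real^'n"
      have k: "student_kernel \<nu> \<mu> S x > 0" using kernel_pos[OF S nu] .
      have a: "\<bar>x$i\<bar> \<le> 1 + x$i * x$i" by (rule abs_le_sq)
      have "norm (x$i * student_kernel \<nu> \<mu> S x) = \<bar>x$i\<bar> * student_kernel \<nu> \<mu> S x"
        using k by (simp add: abs_mult)
      also have "\<dots> \<le> (1 + x$i * x$i) * student_kernel \<nu> \<mu> S x"
        using a k by (intro mult_right_mono) auto
      also have "\<dots> = norm (student_kernel \<nu> \<mu> S x + x$i * x$i * student_kernel \<nu> \<mu> S x)"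
      proof -
        have "0 \<le> x$i * x$i * student_kernel \<nu> \<mu> S x" using k by simp
        then have "0 \<le> student_kernel \<nu> \<mu> S x + x$i * x$i * student_kernel \<nu> \<mu> S x" using k by linarith
        then show ?thesis by (simp add: algebra_simps)
      qed
      finally show "norm (x$i * student_kernel \<nu> \<mu> S x) \<le> norm (student_kernel \<nu> \<mu> S x + x$i * x$i * student_kernel \<nu> \<mu> S x)" .
    qed
  qed
qed

lemma kernel_moment_neg:
  fixes S :: "real^'n^'n"
  assumes S: "pos_def_sym S" and nu: "\<nu> > 0" "\<nu> \<le> 2"
  shows "\<not> integrable lborel (\<lambda>x. x$i * x$i * student_kernel \<nu> \<mu> S x)"
proof
  assume ii: "integrable lborel (\<lambda>x. x$i * x$i * student_kernel \<nu> \<mu> S x)"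
  obtain U where U: "det U \<noteq> 0" and Q: "\<forall>y. (U *v y) \<bullet> (matrix_inv S *v (U *v y)) = y \<bullet> y"
    using pd_sqrt[OF S] by blast
  have ki: "integrable lborel (student_kernel \<nu> \<mu> S)" using kernel_integral(1)[OF S nu(1)] .
  have i1: "integrable lborel (\<lambda>x. x$i * student_kernel \<nu> \<mu> S x)" using first_moment[OF S nu(1) ii] .
  define G where "G x = (x$i - \<mu>$i)^2 * student_kernel \<nu> \<mu> S x" for x
  have Gm: "G \<in> borel_measurable lborel" unfolding G_def by measurable
  have "G = (\<lambda>x. x$i * x$i * student_kernel \<nu> \<mu> S x - (2 * \<mu>$i) * (x$i * student_kernel \<nu> \<mu> S x)
              + (\<mu>$i)^2 * student_kernel \<nu> \<mu> S x)"
    unfolding G_def by (simp add: fun_eq_iff power2_eq_square algebra_simps)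
  then have Gi: "integrable lborel G" using ii i1 ki by simp
  then have "integrable lborel (\<lambda>y. G (\<mu> + U *v y))" using affine_cov(1)[OF U Gm, of \<mu>] by simp
  moreover have "G (\<mu> + U *v y) = (row i U \<bullet> y)^2 * (1 + (y \<bullet> y) / \<nu>) powr (-(\<nu> + real CARD('n)) / 2)" for y
  proof -
    have "(U *v y) $ i = row i U \<bullet> y"
      by (simp add: matrix_vector_mult_def row_def inner_vec_def mult.commute)
    then show ?thesis unfolding G_def using kernel_at[OF Q, of \<nu> \<mu> y] by simp
  qed
  ultimately have "integrable lborel (\<lambda>y. (row i U \<bullet> y)^2 * (1 + (y \<bullet> y) / \<nu>) powr (-(\<nu> + real CARD('n)) / 2))"
    by simp
  then have "integrable lborel (\<lambda>y. (row i U \<bullet> y)^2 * (1 + (y \<bullet> y) / \<nu>) powr (-((\<nu> + real CARD('n)) / 2)))"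
    unfolding exp_eq .
  moreover have "row i U \<noteq> 0" using U det_zero_row(1)[of i U] by auto
  ultimately show False
    using nonint_scaling[of "row i U" \<nu> "(\<nu> + real CARD('n)) / 2"] nu by simp
qed


lemma scaled_pd:
  fixes S :: "real^'n^'n"
  assumes S: "pos_def_sym S" and c: "c > 0"
  shows "pos_def_sym (c *\<^sub>R S)" and "matrix_inv (c *\<^sub>R S) = (1/c) *\<^sub>R matrix_inv S"
proof -
  have St: "transpose S = S" and Sp: "\<And>x. x \<noteq> 0 \<Longrightarrow> x \<bullet> (S *v x) > 0"
    using S unfolding pos_def_sym_def by auto
  have "transpose (c *\<^sub>R S) = c *\<^sub>R S" using St by (simp add: transpose_scalar)
  moreover have "x \<bullet> ((c *\<^sub>R S) *v x) > 0" if "x \<noteq> 0" for x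
    using Sp[OF that] c by (simp add: scaleR_matrix_vector_assoc[symmetric])
  ultimately show "pos_def_sym (c *\<^sub>R S)" unfolding pos_def_sym_def by blast
  note I = invertible_inv[OF pd_inj[OF S]]
  show "matrix_inv (c *\<^sub>R S) = (1/c) *\<^sub>R matrix_inv S"
    by (rule matrix_inv_eq) (use c I in \<open>simp_all add: matrix_scalar_ac\<close>)
qed

lemma det_scaled:
  fixes S :: "real^'n^'n"
  shows "det (c *\<^sub>R S) = c ^ CARD('n) * det S"
proof -
  have "c *\<^sub>R S = matrix (\<lambda>y. c *\<^sub>R y) ** S"
    unfolding matrix_eq
    by (simp add: matrix_vector_mul_assoc[symmetric] matrix_works linear_scaleR scaleR_matrix_vector_assoc)
  then show ?thesis by (simp add: det_mul)
qed

theorem proposition4: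
  fixes \<nu>p \<nu> :: real and \<mu>p :: "real^'n" and \<Sigma>p :: "real^'n^'n"
    and p :: "real^'n \<Rightarrow> real"
  assumes "\<nu>p > 0" and "\<nu> > 0" and "pos_def_sym \<Sigma>p"
    and "p = student_density \<nu>p \<mu>p \<Sigma>p"
  defines "d \<equiv> real CARD('n)"
  defines "\<nu>\<alpha> \<equiv> \<nu>p + 2 * (\<nu>p + d) / (\<nu> + d)"
  shows "(student_compatible \<nu> p \<longleftrightarrow> \<nu>\<alpha> > 2)
    \<and> escort (student_alpha \<nu> CARD('n)) p
        = student_density \<nu>\<alpha> \<mu>p ((\<nu>p / \<nu>\<alpha>) *\<^sub>R \<Sigma>p)"
proof -
  note nup = assms(1) and nu = assms(2) and Sp = assms(3) and p_def = assms(4)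
  have d0: "d > 0" unfolding d_def by simp
  have na0: "\<nu>\<alpha> > 0" unfolding \<nu>\<alpha>_def using nup nu d0 by (simp add: add_pos_pos)
  define \<alpha> where "\<alpha> = student_alpha \<nu> CARD('n)"
  have \<alpha>: "\<alpha> = 1 + 2 / (\<nu> + d)" unfolding \<alpha>_def student_alpha_def d_def ..
  have \<alpha>0: "\<alpha> > 0" using \<alpha> nu d0 by (simp add: add_pos_pos)
  have aeq: "-(\<nu>p + d) / 2 * \<alpha> = -(\<nu>\<alpha> + d) / 2"
    unfolding \<alpha> \<nu>\<alpha>_def using nu d0 by (simp add: field_simps)
  define c where "c = \<nu>p / \<nu>\<alpha>"
  have c0: "c > 0" unfolding c_def using nup na0 by simp
  define S' where "S' = c *\<^sub>R \<Sigma>p"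
  have S'pd: "pos_def_sym S'" unfolding S'_def using scaled_pd(1)[OF Sp c0] .
  have S'inv: "matrix_inv S' = (1/c) *\<^sub>R matrix_inv \<Sigma>p" unfolding S'_def using scaled_pd(2)[OF Sp c0] .
  have dS'0: "det S' > 0" using pd_sqrt[OF S'pd] by blast
  have dSp0: "det \<Sigma>p > 0" using pd_sqrt[OF Sp] by blast
  define k' where "k' = student_kernel \<nu>\<alpha> \<mu>p S'"
  have kpow: "student_kernel \<nu>p \<mu>p \<Sigma>p x powr \<alpha> = k' x" for x
  proof -
    define Q where "Q = (x - \<mu>p) \<bullet> (matrix_inv \<Sigma>p *v (x - \<mu>p))"
    have "1 + (1/\<nu>\<alpha>) * ((x - \<mu>p) \<bullet> (matrix_inv S' *v (x - \<mu>p))) = 1 + (1/\<nu>p) * Q"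
      unfolding S'inv Q_def c_def using na0 nup by (simp add: scaleR_matrix_vector_assoc[symmetric])
    then have "k' x = (1 + (1/\<nu>p) * Q) powr (-(\<nu>\<alpha> + d) / 2)"
      unfolding k'_def student_kernel_def d_def by simp
    also have "\<dots> = ((1 + (1/\<nu>p) * Q) powr (-(\<nu>p + d) / 2)) powr \<alpha>"
      by (simp only: powr_powr aeq)
    finally show ?thesis unfolding student_kernel_def Q_def d_def by simp
  qed
  define Zp where "Zp = integral\<^sup>L lborel (student_kernel \<nu>p 0 (mat 1) :: real^'n \<Rightarrow> real)"
  have Zp0: "Zp > 0" unfolding Zp_def using Z_pos[OF nup] .
  define C where "C = (1 / Zp) * det \<Sigma>p powr (-1/2)"
  have C0: "C > 0" unfolding C_def using Zp0 dSp0 by simp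
  have pform: "p x = C * student_kernel \<nu>p \<mu>p \<Sigma>p x" for x
    unfolding p_def student_density_def C_def Zp_def by simp
  define Ca where "Ca = C powr \<alpha>"
  have Ca0: "Ca > 0" unfolding Ca_def using C0 by simp
  have ppow: "p x powr \<alpha> = Ca * k' x" for x
    unfolding pform Ca_def kpow[symmetric] by (rule powr_mult)
  have k'i: "integrable lborel k'" unfolding k'_def using kernel_integral(1)[OF S'pd na0] .
  define Z' where "Z' = integral\<^sup>L lborel (student_kernel \<nu>\<alpha> 0 (mat 1) :: real^'n \<Rightarrow> real)"
  have Z'0: "Z' > 0" unfolding Z'_def using Z_pos[OF na0] .
  have k'int: "integral\<^sup>L lborel k' = sqrt (det S') * Z'"
    unfolding k'_def Z'_def using kernel_integral(2)[OF S'pd na0] .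
  have pint: "integral\<^sup>L lborel (\<lambda>x. p x powr \<alpha>) = Ca * (sqrt (det S') * Z')"
    unfolding ppow using k'int by simp
  have esc: "escort \<alpha> p = student_density \<nu>\<alpha> \<mu>p S'"
  proof
    fix x
    have hd: "det S' powr (-1/2) = 1 / sqrt (det S')"
    proof -
      have "det S' powr (-1/2) = inverse (det S' powr (1/2))"
        using powr_minus[of "det S'" "1/2"] by simp
      moreover have "det S' powr (1/2) = sqrt (det S')" using dS'0 by (intro powr_half_sqrt) simp
      ultimately show ?thesis by (simp add: inverse_eq_divide)
    qed
    have "escort \<alpha> p x = Ca * k' x / (Ca * (sqrt (det S') * Z'))"
      unfolding escort_def ppow[symmetric] pint ..
    also have "\<dots> = k' x / (sqrt (det S') * Z')" using Ca0 by simp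
    also have "\<dots> = student_density \<nu>\<alpha> \<mu>p S' x"
      unfolding student_density_def hd k'_def Z'_def by simp
    finally show "escort \<alpha> p x = student_density \<nu>\<alpha> \<mu>p S' x" .
  qed
  define \<Phi> where "\<Phi> \<longleftrightarrow> integrable lborel (\<lambda>x. p x powr \<alpha>)
           \<and> integral\<^sup>L lborel (\<lambda>x. p x powr \<alpha>) > 0
           \<and> (\<forall>i. integrable lborel (\<lambda>x. x $ i * p x powr \<alpha>))
           \<and> (\<forall>i j. integrable lborel (\<lambda>x. x $ i * x $ j * p x powr \<alpha>))"
  have comp: "student_compatible \<nu> p \<longleftrightarrow> \<Phi>"
  proof -
    have supp: "{x. student_density \<nu> \<mu> S x > 0} = UNIV" if "pos_def_sym S" for \<mu> :: "real^'n" and S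
      using density_pos[OF that nu] by blast
    have I: "pos_def_sym (mat 1 :: real^'n^'n)" unfolding pos_def_sym_def by simp
    have "student_compatible \<nu> p \<longleftrightarrow> (\<forall>(\<mu>::real^'n) (S::real^'n^'n). pos_def_sym S \<longrightarrow> \<Phi>)"
      unfolding student_compatible_def Let_def \<Phi>_def \<alpha>_def
      by (intro all_cong1 imp_cong refl) (simp add: supp)
    also have "\<dots> \<longleftrightarrow> \<Phi>" using I by blast
    finally show ?thesis .
  qed
  have mom: "(\<forall>i j. integrable lborel (\<lambda>x. x $ i * x $ j * k' x)) \<longleftrightarrow> \<nu>\<alpha> > 2"
  proof
    assume H: "\<forall>i j. integrable lborel (\<lambda>x. x $ i * x $ j * k' x)"
    show "\<nu>\<alpha> > 2"
    proof (rule ccontr)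
      assume "\<not> \<nu>\<alpha> > 2"
      then have "\<nu>\<alpha> \<le> 2" by simp
      then show False using kernel_moment_neg[OF S'pd na0, of undefined \<mu>p] H unfolding k'_def by blast
    qed
  next
    assume "\<nu>\<alpha> > 2"
    then show "\<forall>i j. integrable lborel (\<lambda>x. x $ i * x $ j * k' x)"
      unfolding k'_def using kernel_moment_pos[OF S'pd] by blast
  qed
  have "\<Phi> \<longleftrightarrow> (\<forall>i j. integrable lborel (\<lambda>x. x $ i * x $ j * k' x))"
  proof
    assume "\<Phi>"
    then have "integrable lborel (\<lambda>x. x $ i * x $ j * (Ca * k' x))" for i j
      unfolding \<Phi>_def ppow by blast
    then have "integrable lborel (\<lambda>x. Ca * (x $ i * x $ j * k' x))" for i j
      by (simp add: ac_simps)
    then show "\<forall>i j. integrable lborel (\<lambda>x. x $ i * x $ j * k' x)" using Ca0 by simp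
  next
    assume H: "\<forall>i j. integrable lborel (\<lambda>x. x $ i * x $ j * k' x)"
    have H1: "integrable lborel (\<lambda>x. x $ i * k' x)" for i
      using first_moment[OF S'pd na0, of i \<mu>p] H unfolding k'_def by blast
    have "integrable lborel (\<lambda>x. Ca * k' x)" using k'i by simp
    moreover have "integral\<^sup>L lborel (\<lambda>x. Ca * k' x) > 0"
      using k'int Ca0 dS'0 Z'0 by simp
    moreover have "integrable lborel (\<lambda>x. Ca * (x $ i * k' x))" for i using H1 by simp
    moreover have "integrable lborel (\<lambda>x. Ca * (x $ i * x $ j * k' x))" for i j using H by simp
    ultimately show "\<Phi>" unfolding \<Phi>_def ppow by (simp add: ac_simps)
  qed
  then have "student_compatible \<nu> p \<longleftrightarrow> \<nu>\<alpha> > 2" using comp mom by simp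
  moreover have "escort (student_alpha \<nu> CARD('n)) p = student_density \<nu>\<alpha> \<mu>p ((\<nu>p / \<nu>\<alpha>) *\<^sub>R \<Sigma>p)"
    using esc unfolding \<alpha>_def S'_def c_def .
  ultimately show ?thesis by blast
qed

end
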